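(* Let $p$ be an odd prime, $R=F_p+vF_p$ with $v^2=v$, $\theta=\lambda+v\mu$ ($\lambda,\mu\in F_p$) a unit of $R$, and $R_n=R[x]/\langle x^n-\theta\rangle$. Let $C$ be an ideal in $R_n$. Then there exists a unique polynomial $g(x)=vg(x)^{\sigma}+(1-v)g(x)^{\tau}\in C$ such that $C=\langle g(x)\rangle$ with $g(x)^\sigma$ and $g(x)^\tau$ monic in $F_p[x]$; furthermore, $g(x)$ is a divisor of $x^n-\theta$. In particular, $R_n$ is a principal ideal ring.
   Context: Every element of $R$ is uniquely $va+(1-v)b$ with $a,b\in F_p$; define $\sigma,\tau:R\to F_p$ by $\sigma(va+(1-v)b)=a$, $\tau(va+(1-v)b)=b$. For $f(x)=\sum a_ix^i\in R[x]$ put $f(x)^\sigma=\sum\sigma(a_i)x^i$ and $f(x)^\tau=\sum\tau(a_i)x^i$, so $f(x)=vf(x)^\sigma+(1-v)f(x)^\tau$. $\langle g\rangle$ denotes the ideal generated by $g$. *)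

theory Defs
  imports "HOL-Computational_Algebra.Computational_Algebra" "HOL-Library.Cardinality"
begin

text \<open>The ring R = F_p + v F_p with v^2 = v: the element VR a b stands for a + v b.\<close>

datatype 'a vr = VR 'a 'a

instantiation vr :: (comm_ring_1) comm_ring_1
begin
definition "0 = VR 0 0"
definition "1 = VR 1 0"
fun plus_vr where "plus_vr (VR a b) (VR c d) = VR (a + c) (b + d)"
fun minus_vr where "minus_vr (VR a b) (VR c d) = VR (a - c) (b - d)"
fun uminus_vr where "uminus_vr (VR a b) = VR (- a) (- b)"
fun times_vr where "times_vr (VR a b) (VR c d) = VR (a * c) (a * d + b * c + b * d)"
instance
proof
  fix x y z :: "'a vr"
  show "x * y * z = x * (y * z)"
    by (cases x; cases y; cases z) (simp add: algebra_simps)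
  show "x * y = y * x" by (cases x; cases y) (simp add: algebra_simps)
  show "1 * x = x" by (cases x) (simp add: one_vr_def)
  show "x + y + z = x + (y + z)" by (cases x; cases y; cases z) (simp add: algebra_simps)
  show "x + y = y + x" by (cases x; cases y) (simp add: algebra_simps)
  show "0 + x = x" by (cases x) (simp add: zero_vr_def)
  show "- x + x = 0" by (cases x) (simp add: zero_vr_def)
  show "x - y = x + - y" by (cases x; cases y) simp
  show "(x + y) * z = x * z + y * z" by (cases x; cases y; cases z) (simp add: algebra_simps)
  show "(0::'a vr) \<noteq> 1" by (simp add: zero_vr_def one_vr_def)
qed
end

definition vv :: "'a::comm_ring_1 vr" where "vv = VR 0 1"
definition emb :: "'a::comm_ring_1 \<Rightarrow> 'a vr" where "emb a = VR a 0"

definition sigma :: "'a::comm_ring_1 vr \<Rightarrow> 'a" where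
  "sigma x = (THE a. \<exists>b. x = vv * emb a + (1 - vv) * emb b)"
definition tau :: "'a::comm_ring_1 vr \<Rightarrow> 'a" where
  "tau x = (THE b. \<exists>a. x = vv * emb a + (1 - vv) * emb b)"

definition is_ideal :: "'b::comm_ring_1 set \<Rightarrow> bool" where
  "is_ideal I \<longleftrightarrow> 0 \<in> I \<and> (\<forall>x\<in>I. \<forall>y\<in>I. x + y \<in> I) \<and> (\<forall>x\<in>I. \<forall>r. r * x \<in> I)"

end

theory Submission imports Defs begin

lemma vr_decomp: "vv * emb a + (1 - vv) * emb b = VR b (a - b)"
  by (simp add: vv_def emb_def one_vr_def)

lemma sigma_VR[simp]: "sigma (VR c d) = c + d"
  unfolding sigma_def
  by (rule the_equality) (auto simp: vr_decomp)

lemma tau_VR[simp]: "tau (VR c d) = c"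
  unfolding tau_def
  by (rule the_equality) (auto simp: vr_decomp intro: exI[of _ "c+d"])

lemma VR_cases': obtains a b where "x = VR a b" by (cases x) auto

lemma sigma_0[simp]: "sigma 0 = 0" by (simp add: zero_vr_def)
lemma tau_0[simp]: "tau 0 = 0" by (simp add: zero_vr_def)
lemma sigma_1[simp]: "sigma 1 = 1" by (simp add: one_vr_def)
lemma tau_1[simp]: "tau 1 = 1" by (simp add: one_vr_def)
lemma sigma_add: "sigma (x + y) = sigma x + sigma y"
  by (cases x; cases y) (simp add: algebra_simps)
lemma tau_add: "tau (x + y) = tau x + tau y"
  by (cases x; cases y) (simp add: algebra_simps)
lemma sigma_mult: "sigma (x * y) = sigma x * sigma y"
  by (cases x; cases y) (simp add: algebra_simps)
lemma tau_mult: "tau (x * y) = tau x * tau y"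
  by (cases x; cases y) (simp add: algebra_simps)
lemma sigma_tau_inj: "sigma x = sigma y \<Longrightarrow> tau x = tau y \<Longrightarrow> x = y"
  by (cases x; cases y) simp

lemma map_poly_add_hom:
  assumes "f 0 = 0" "\<And>x y. f (x + y) = f x + f y"
  shows "map_poly f (p + q) = map_poly f p + map_poly f q"
  by (intro poly_eqI) (simp add: assms coeff_map_poly)

lemma map_poly_mult_hom:
  fixes f :: "'a::comm_ring_1 \<Rightarrow> 'b::comm_ring_1"
  assumes "f 0 = 0" "\<And>x y. f (x + y) = f x + f y" "\<And>x y. f (x * y) = f x * f y"
  shows "map_poly f (p * q) = map_poly f p * map_poly f q"
proof (induction p)
  case 0 then show ?case by simp
next
  case (pCons a p)
  show ?case
    by (simp add: assms map_poly_add_hom map_poly_smult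
        map_poly_pCons pCons algebra_simps)
qed

abbreviation S :: "'a::comm_ring_1 vr poly \<Rightarrow> 'a poly" where "S \<equiv> map_poly sigma"
abbreviation T :: "'a::comm_ring_1 vr poly \<Rightarrow> 'a poly" where "T \<equiv> map_poly tau"

lemma S_add: "S (p + q) = S p + S q" by (simp add: map_poly_add_hom sigma_add)
lemma T_add: "T (p + q) = T p + T q" by (simp add: map_poly_add_hom tau_add)
lemma S_mult: "S (p * q) = S p * S q" by (simp add: map_poly_mult_hom sigma_add sigma_mult)
lemma T_mult: "T (p * q) = T p * T q" by (simp add: map_poly_mult_hom tau_add tau_mult)
lemma S_diff: "S (p - q) = S p - S q"
  by (metis S_add diff_add_cancel eq_diff_eq)
lemma T_diff: "T (p - q) = T p - T q"
  by (metis T_add diff_add_cancel eq_diff_eq)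
lemma ST_inj: "S p = S q \<Longrightarrow> T p = T q \<Longrightarrow> p = q"
  by (rule poly_eqI, rule sigma_tau_inj) (metis coeff_map_poly sigma_0 tau_0)+

definition lift :: "'a::comm_ring_1 poly \<Rightarrow> 'a poly \<Rightarrow> 'a vr poly" where
  "lift f g = map_poly (\<lambda>c. VR c 0) g + smult vv (map_poly (\<lambda>c. VR c 0) (f - g))"

lemma S_lift[simp]: "S (lift f g) = f"
  by (rule poly_eqI) (simp add: lift_def coeff_map_poly zero_vr_def vv_def sigma_add)
lemma T_lift[simp]: "T (lift f g) = g"
  by (rule poly_eqI) (simp add: lift_def coeff_map_poly zero_vr_def vv_def tau_add)

lemma monic_antisym:
  fixes p q :: "'a::field poly"
  assumes "lead_coeff p = 1" "lead_coeff q = 1" "p dvd q" "q dvd p"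
  shows "p = q"
proof -
  obtain k where k: "q = p * k" using assms(3) by blast
  obtain m where m: "p = q * m" using assms(4) by blast
  have p0: "p \<noteq> 0" using assms(1) by auto
  have "p * 1 = p * (k * m)" using k m by (simp add: algebra_simps)
  then have km: "k * m = 1" using p0 by (metis mult_left_cancel)
  then have "degree k = 0"
    by (metis add_eq_0_iff_both_eq_0 degree_1 degree_mult_eq mult_not_zero one_neq_zero)
  then obtain c where c: "k = [:c:]" by (metis degree_eq_zeroE)
  have "lead_coeff q = lead_coeff p * c" using k c by simp
  then have "c = 1" using assms by simp
  then show ?thesis using k c by simp
qed

lemma principal_poly_ideal:
  fixes I :: "'a::field poly set"
  assumes I0: "0 \<in> I" and Iadd: "\<And>x y. x \<in> I \<Longrightarrow> y \<in> I \<Longrightarrow> x + y \<in> I"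
    and Imul: "\<And>x r. x \<in> I \<Longrightarrow> r * x \<in> I"
    and N: "N \<in> I" "N \<noteq> 0"
  shows "\<exists>h\<in>I. lead_coeff h = 1 \<and> (\<forall>f\<in>I. h dvd f)"
proof -
  define d where "d = (LEAST k. \<exists>f\<in>I. f \<noteq> 0 \<and> degree f = k)"
  have "\<exists>f\<in>I. f \<noteq> 0 \<and> degree f = d"
    unfolding d_def by (rule LeastI_ex) (use N in blast)
  then obtain f0 where f0: "f0 \<in> I" "f0 \<noteq> 0" "degree f0 = d" by blast
  define h where "h = smult (inverse (lead_coeff f0)) f0"
  have hI: "h \<in> I" unfolding h_def using Imul[OF f0(1), of "[:inverse (lead_coeff f0):]"] by simp
  have hm: "lead_coeff h = 1" unfolding h_def using f0(2) by simp
  have hd: "degree h = d" unfolding h_def using f0 by (metis degree_smult_eq inverse_eq_iff_eq inverse_zero leading_coeff_0_iff)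
  have minus: "- x \<in> I" if "x \<in> I" for x using Imul[OF that, of "-1"] by simp
  have "h dvd f" if f: "f \<in> I" for f
  proof -
    have "f mod h = f + - ((f div h) * h)" by (simp add: mod_div_mult_eq[symmetric] algebra_simps)
    then have mI: "f mod h \<in> I" using Iadd[OF f minus[OF Imul[OF hI]]] by simp
    show ?thesis
    proof (rule ccontr)
      assume "\<not> h dvd f"
      then have nz: "f mod h \<noteq> 0" by (simp add: mod_eq_0_iff_dvd)
      have "h \<noteq> 0" using hm by auto
      then have "degree (f mod h) < degree h" using nz degree_mod_less by blast
      moreover have "d \<le> degree (f mod h)" unfolding d_def
        by (rule Least_le) (use mI nz in blast)
      ultimately show False using hd by simp
    qed
  qed
  then show ?thesis using hI hm by blast
qed

lemma S_dvd: "p dvd q \<Longrightarrow> S p dvd S q" by (metis S_mult dvdE dvdI)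
lemma T_dvd: "p dvd q \<Longrightarrow> T p dvd T q" by (metis T_mult dvdE dvdI)
lemma S_const[simp]: "S [:c:] = [:sigma c:]" by (simp add: map_poly_pCons)
lemma T_const[simp]: "T [:c:] = [:tau c:]" by (simp add: map_poly_pCons)
lemma S_monom[simp]: "S (monom 1 n) = monom 1 n" by (simp add: map_poly_monom)
lemma T_monom[simp]: "T (monom 1 n) = monom 1 n" by (simp add: map_poly_monom)

lemma binom_nz: "n > 0 \<Longrightarrow> monom (1::'a::field) n - [:c:] \<noteq> 0"
proof
  assume "n > 0" "monom (1::'a) n - [:c:] = 0"
  then have "coeff (monom (1::'a) n - [:c:]) n = 0" by simp
  with \<open>n > 0\<close> show False by (simp add: coeff_pCons split: nat.splits)
qed

lemma ideal_image:
  fixes C :: "'a::field vr poly set" and F :: "'a vr poly \<Rightarrow> 'a poly"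
  assumes "is_ideal C" and F0: "F 0 = 0" and Fadd: "\<And>x y. F (x + y) = F x + F y"
    and Fmul: "\<And>x y. F (x * y) = F x * F y" and Fsurj: "\<And>r. \<exists>R. F R = r"
    and N: "N \<in> C" "F N \<noteq> 0"
  shows "\<exists>h\<in>F ` C. lead_coeff h = 1 \<and> (\<forall>f\<in>F ` C. h dvd f)"
proof (rule principal_poly_ideal)
  show "0 \<in> F ` C" using assms(1) F0 unfolding is_ideal_def by force
  show "x + y \<in> F ` C" if xy: "x \<in> F ` C" "y \<in> F ` C" for x y
    proof -
    obtain a b where "a \<in> C" "b \<in> C" "x = F a" "y = F b" using xy by blast
    moreover have "a + b \<in> C" using assms(1) calculation unfolding is_ideal_def by blast
    ultimately show ?thesis by (metis Fadd image_eqI)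
  qed
  show "r * x \<in> F ` C" if xF: "x \<in> F ` C" for x r
  proof -
    obtain c where c: "c \<in> C" "x = F c" using xF by blast
    obtain R where R: "F R = r" using Fsurj by blast
    have "R * c \<in> C" using assms(1) c unfolding is_ideal_def by blast
    then show ?thesis using c R by (metis Fmul image_eqI)
  qed
  show "F N \<in> F ` C" using N by blast
  show "F N \<noteq> 0" by (rule N)
qed

theorem corollary3p8:
  fixes p n :: nat and lam mu :: "'a::{field,finite}" and C :: "'a vr poly set"
  assumes "prime p" and "odd p" and "CARD('a) = p" and "n > 0"
    and "(emb lam + vv * emb mu) dvd 1"
    and "is_ideal C"
    and "monom 1 n - [:emb lam + vv * emb mu:] \<in> C"
  shows "\<exists>!g. g \<in> C
           \<and> C = {g * q + (monom 1 n - [:emb lam + vv * emb mu:]) * r | q r. True}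
           \<and> lead_coeff (map_poly sigma g) = 1 \<and> lead_coeff (map_poly tau g) = 1
           \<and> g dvd (monom 1 n - [:emb lam + vv * emb mu:])"
proof -
  define N where "N = monom 1 n - [:emb lam + vv * emb mu:]"
  have NC: "N \<in> C" using assms(7) N_def by simp
  have id: "is_ideal C" by fact
  have Cadd: "x + y \<in> C" if "x \<in> C" "y \<in> C" for x y using id that unfolding is_ideal_def by blast
  have Cmul: "r * x \<in> C" if "x \<in> C" for x r using id that unfolding is_ideal_def by blast
  have SN: "S N \<noteq> 0" unfolding N_def S_diff using binom_nz[OF assms(4)] by simp
  have TN: "T N \<noteq> 0" unfolding N_def T_diff using binom_nz[OF assms(4)] by simp
  obtain h1 where h1: "h1 \<in> S ` C" "lead_coeff h1 = 1" "\<forall>f\<in>S ` C. h1 dvd f"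
    using ideal_image[OF id _ S_add S_mult _ NC SN] by (metis S_lift map_poly_0)
  obtain h2 where h2: "h2 \<in> T ` C" "lead_coeff h2 = 1" "\<forall>f\<in>T ` C. h2 dvd f"
    using ideal_image[OF id _ T_add T_mult _ NC TN] by (metis T_lift map_poly_0)
  define g where "g = lift h1 h2"
  define e :: "'a vr poly" where "e = lift 1 0"
  obtain c1 where c1: "c1 \<in> C" "h1 = S c1" using h1 by blast
  obtain c2 where c2: "c2 \<in> C" "h2 = T c2" using h2 by blast
  have gC: "g \<in> C"
  proof -
    have "g = e * c1 + (1 - e) * c2"
      by (rule ST_inj) (simp_all add: g_def e_def S_add T_add S_mult T_mult S_diff T_diff c1 c2)
    then show ?thesis using Cadd Cmul c1 c2 by simp
  qed
  have gdvd: "g dvd c" if cC: "c \<in> C" for c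
  proof -
    have "S c \<in> S ` C" "T c \<in> T ` C" using cC by blast+
    then obtain a b where a: "S c = h1 * a" and b: "T c = h2 * b" using h1(3) h2(3) by (meson dvdE)
    have "c = g * lift a b"
      by (rule ST_inj) (simp_all add: g_def S_mult T_mult a b)
    then show ?thesis by simp
  qed
  have gN: "g dvd N" using gdvd NC by blast
  show ?thesis
    unfolding N_def[symmetric]
  proof (rule ex1I[of _ g], intro conjI)
    show "g \<in> C" by fact
    show "C = {g * q + N * r | q r. True}"
    proof
      show "C \<subseteq> {g * q + N * r | q r. True}"
      proof
        fix c assume "c \<in> C"
        then obtain w where "c = g * w" using gdvd by blast
        then show "c \<in> {g * q + N * r | q r. True}" by (intro CollectI exI[of _ w] exI[of _ 0]) simp
      qed
      show "{g * q + N * r | q r. True} \<subseteq> C"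
      proof
        fix x assume "x \<in> {g * q + N * r | q r. True}"
        then obtain q r where x: "x = g * q + N * r" by blast
        have "q * g \<in> C" "r * N \<in> C" using Cmul gC NC by blast+
        then show "x \<in> C" unfolding x using Cadd by (simp add: mult.commute)
      qed
    qed
    show "lead_coeff (S g) = 1" using h1 by (simp add: g_def)
    show "lead_coeff (T g) = 1" using h2 by (simp add: g_def)
    show "g dvd N" by fact
  next
    fix g' assume g': "g' \<in> C \<and> C = {g' * q + N * r | q r. True} \<and> lead_coeff (S g') = 1
      \<and> lead_coeff (T g') = 1 \<and> g' dvd N"
    have g'dvd: "g' dvd c" if cC: "c \<in> C" for c
    proof -
      from cC g' obtain q r where "c = g' * q + N * r" by blast
      moreover obtain k where "N = g' * k" using g' by blast
      ultimately have "c = g' * (q + k * r)" by (simp add: algebra_simps)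
      then show ?thesis by simp
    qed
    have "S g' = h1"
    proof (rule monic_antisym)
      show "lead_coeff (S g') = 1" using g' by blast
      show "lead_coeff h1 = 1" by (rule h1(2))
      show "S g' dvd h1" unfolding c1(2) by (rule S_dvd, rule g'dvd, rule c1(1))
      show "h1 dvd S g'" using h1(3) g' by blast
    qed
    moreover have "T g' = h2"
    proof (rule monic_antisym)
      show "lead_coeff (T g') = 1" using g' by blast
      show "lead_coeff h2 = 1" by (rule h2(2))
      show "T g' dvd h2" unfolding c2(2) by (rule T_dvd, rule g'dvd, rule c2(1))
      show "h2 dvd T g'" using h2(3) g' by blast
    qed
    ultimately show "g' = g" by (intro ST_inj) (simp_all add: g_def)
  qed
qed

end
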